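(* Let $\varSigma$ be a surface diffeomorphic to $T^2$ or to the Klein bottle. If $\mathrm{D}$ is any flat connection on $\varSigma$ and $\xi$ is any $1$-form on $\varSigma$, then the connection $\nabla=\mathrm{D}-\xi\otimes\mathrm{Id}$ on $\varSigma$ (i.e.\ $\nabla_vw=\mathrm{D}_vw-\xi(v)w$) has skew-symmetric Ricci tensor. Conversely, every connection on $\varSigma$ with skew-symmetric Ricci tensor equals $\mathrm{D}-\xi\otimes\mathrm{Id}$ for some flat connection $\mathrm{D}$ on $\varSigma$ and some $1$-form $\xi$ on $\varSigma$.
   Context: Connections are in $T\varSigma$ and may have torsion. Curvature: $R(u,v)w=\nabla_v\nabla_u w-\nabla_u\nabla_v w+\nabla_{[u,v]}w$; Ricci tensor: $\rho(u,v)=\mathrm{tr}[w\mapsto R(u,w)v]$. *)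

theory Defs
  imports "HOL-Analysis.Analysis"
begin

text \<open>We model a compact surface as a quotient of the plane (real^2) by a group of
  affine deck transformations p |-> A p + c acting freely and properly discontinuously.
  Klein bottle: (x,y) |-> (x + m, (-1)^m y + n), m n integers; this group is generated by
  (x,y) |-> (x+1,-y) and (x,y) |-> (x,y+1).\<close>

type_synonym pt = "real^2"
type_synonym deck = "(real^2^2) \<times> (real^2)"

definition vec2 :: "real \<Rightarrow> real \<Rightarrow> real^2" where
  "vec2 a b = (\<chi> i. if i = 1 then a else b)"

definition diag2 :: "real \<Rightarrow> real \<Rightarrow> real^2^2" where
  "diag2 a b = (\<chi> i j. if i = j then (if i = 1 then a else b) else 0)"

definition torus_deck :: "deck set" where
  "torus_deck = {(mat 1, vec2 (of_int m) (of_int n)) | m n :: int. True}"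

definition klein_deck :: "deck set" where
  "klein_deck = {(diag2 1 ((-1) powi m), vec2 (of_int m) (of_int n)) | m n :: int. True}"

definition act :: "deck \<Rightarrow> pt \<Rightarrow> pt" where
  "act g p = fst g *v p + snd g"

fun Ck :: "nat \<Rightarrow> (real^2 \<Rightarrow> 'b::real_normed_vector) \<Rightarrow> bool" where
  "Ck 0 f = continuous_on UNIV f"
| "Ck (Suc k) f = ((\<forall>p. f differentiable (at p)) \<and>
                   (\<forall>v. Ck k (\<lambda>p. frechet_derivative f (at p) v)))"

definition smooth :: "(real^2 \<Rightarrow> 'b::real_normed_vector) \<Rightarrow> bool" where
  "smooth f = (\<forall>k. Ck k f)"

text \<open>A (possibly torsionful) affine connection on the tangent bundle is given by its
  Christoffel map Gam: (nabla_U W)(p) = DW(p) (U p) + Gam p (U p) (W p), with Gam p bilinear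
  and smooth in p. It descends to the quotient surface iff it is invariant under all deck
  transformations (for affine g(p) = A p + c: Gam (g p) (A u) (A w) = A (Gam p u w)).\<close>

definition is_connection :: "deck set \<Rightarrow> (pt \<Rightarrow> pt \<Rightarrow> pt \<Rightarrow> pt) \<Rightarrow> bool" where
  "is_connection G Gam \<longleftrightarrow>
     (\<forall>p. bilinear (Gam p)) \<and>
     (\<forall>u w. smooth (\<lambda>p. Gam p u w)) \<and>
     (\<forall>g\<in>G. \<forall>p u w. Gam (act g p) (fst g *v u) (fst g *v w) = fst g *v Gam p u w)"

definition is_one_form :: "deck set \<Rightarrow> (pt \<Rightarrow> pt \<Rightarrow> real) \<Rightarrow> bool" where
  "is_one_form G xi \<longleftrightarrow>
     (\<forall>p. linear (xi p)) \<and>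
     (\<forall>u. smooth (\<lambda>p. xi p u)) \<and>
     (\<forall>g\<in>G. \<forall>p u. xi (act g p) (fst g *v u) = xi p u)"

definition cov :: "(pt \<Rightarrow> pt \<Rightarrow> pt \<Rightarrow> pt) \<Rightarrow> (pt \<Rightarrow> pt) \<Rightarrow> (pt \<Rightarrow> pt) \<Rightarrow> pt \<Rightarrow> pt" where
  "cov Gam U W p = frechet_derivative W (at p) (U p) + Gam p (U p) (W p)"

definition lie_bracket :: "(pt \<Rightarrow> pt) \<Rightarrow> (pt \<Rightarrow> pt) \<Rightarrow> pt \<Rightarrow> pt" where
  "lie_bracket U V p = frechet_derivative V (at p) (U p) - frechet_derivative U (at p) (V p)"

text \<open>Curvature with the convention R(u,v)w = nabla_v nabla_u w - nabla_u nabla_v w + nabla_[u,v] w,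
  evaluated at p on tangent vectors u v w (extended to constant vector fields; R is tensorial).\<close>
definition curv :: "(pt \<Rightarrow> pt \<Rightarrow> pt \<Rightarrow> pt) \<Rightarrow> pt \<Rightarrow> pt \<Rightarrow> pt \<Rightarrow> pt \<Rightarrow> pt" where
  "curv Gam p u v w =
     (let U = (\<lambda>_. u); V = (\<lambda>_. v); W = (\<lambda>_. w) in
      cov Gam V (cov Gam U W) p - cov Gam U (cov Gam V W) p + cov Gam (lie_bracket U V) W p)"

definition ricci :: "(pt \<Rightarrow> pt \<Rightarrow> pt \<Rightarrow> pt) \<Rightarrow> pt \<Rightarrow> pt \<Rightarrow> pt \<Rightarrow> real" where
  "ricci Gam p u v = (\<Sum>i\<in>UNIV. curv Gam p u (axis i 1) v $ i)"

definition flat :: "(pt \<Rightarrow> pt \<Rightarrow> pt \<Rightarrow> pt) \<Rightarrow> bool" where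
  "flat Gam \<longleftrightarrow> (\<forall>p u v w. curv Gam p u v w = 0)"

definition ricci_skew :: "(pt \<Rightarrow> pt \<Rightarrow> pt \<Rightarrow> pt) \<Rightarrow> bool" where
  "ricci_skew Gam \<longleftrightarrow> (\<forall>p u v. ricci Gam p u v = - ricci Gam p v u)"

definition twist :: "(pt \<Rightarrow> pt \<Rightarrow> pt \<Rightarrow> pt) \<Rightarrow> (pt \<Rightarrow> pt \<Rightarrow> real) \<Rightarrow> pt \<Rightarrow> pt \<Rightarrow> pt \<Rightarrow> pt" where
  "twist D xi p u w = D p u w - xi p u *\<^sub>R w"

end

theory Submission
  imports Defs
begin


lemma e_expand: "(u::real^2) = u$1 *\<^sub>R axis 1 1 + u$2 *\<^sub>R axis 2 1"
  by (simp add: vec_eq_iff forall_2 axis_def)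


lemma expand2: assumes "linear f" shows "f (u::real^2) = u$1 *\<^sub>R f (axis 1 1) + u$2 *\<^sub>R f (axis 2 1)"
proof -
  have "f u = f (u$1 *\<^sub>R axis 1 1 + u$2 *\<^sub>R axis 2 1)" using e_expand[of u] by (rule arg_cong)
  also have "\<dots> = u$1 *\<^sub>R f (axis 1 1) + u$2 *\<^sub>R f (axis 2 1)"
    by (simp only: linear_add[OF assms] linear_scale[OF assms])
  finally show ?thesis .
qed


lemma fd_add:
  assumes "f differentiable at p" "g differentiable at p"
  shows "frechet_derivative (\<lambda>q. f q + g q) (at p) v = frechet_derivative f (at p) v + frechet_derivative g (at p) v"
proof -
  have "((\<lambda>q. f q + g q) has_derivative (\<lambda>v. frechet_derivative f (at p) v + frechet_derivative g (at p) v)) (at p)"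
    using assms by (intro has_derivative_add) (simp_all add: frechet_derivative_works[symmetric])
  from frechet_derivative_at[OF this] show ?thesis by metis
qed


lemma fd_lin:
  assumes "bounded_linear L" "f differentiable at p"
  shows "frechet_derivative (\<lambda>q. L (f q)) (at p) v = L (frechet_derivative f (at p) v)"
proof -
  have "((\<lambda>q. L (f q)) has_derivative (\<lambda>v. L (frechet_derivative f (at p) v))) (at p)"
    using bounded_linear.has_derivative[OF assms(1) iffD1[OF frechet_derivative_works assms(2)]] .
  from frechet_derivative_at[OF this] show ?thesis by metis
qed


lemma diff_lin:
  assumes "bounded_linear L" "f differentiable at p"
  shows "(\<lambda>q. L (f q)) differentiable at p"
  using bounded_linear.has_derivative[OF assms(1) iffD1[OF frechet_derivative_works assms(2)]]
  by (rule differentiableI)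


lemma Ck_add: "Ck k f \<Longrightarrow> Ck k g \<Longrightarrow> Ck k (\<lambda>p. f p + g p)"
proof (induction k arbitrary: f g)
  case 0 then show ?case by (simp add: continuous_on_add)
next
  case (Suc k)
  have d: "\<And>p. f differentiable at p" "\<And>p. g differentiable at p" using Suc.prems by simp_all
  have dd: "\<And>p. (\<lambda>p. f p + g p) differentiable at p" using differentiable_add[OF d(1) d(2)] .
  have c: "Ck k (\<lambda>p. frechet_derivative f (at p) v)" "Ck k (\<lambda>p. frechet_derivative g (at p) v)" for v
    using Suc.prems by simp_all
  have e: "(\<lambda>p. frechet_derivative (\<lambda>p. f p + g p) (at p) v)
       = (\<lambda>p. frechet_derivative f (at p) v + frechet_derivative g (at p) v)" for v
    by (rule ext) (rule fd_add[OF d(1) d(2)])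
  have "Ck k (\<lambda>p. frechet_derivative (\<lambda>p. f p + g p) (at p) v)" for v
    unfolding e using Suc.IH[OF c(1) c(2)] .
  then show ?case using dd by simp
qed

lemma Ck_lin: "bounded_linear L \<Longrightarrow> Ck k f \<Longrightarrow> Ck k (\<lambda>p. L (f p))"
proof (induction k arbitrary: f)
  case 0 then show ?case using bounded_linear.continuous_on[OF 0(1)] by simp
next
  case (Suc k)
  have d: "\<And>p. f differentiable at p" using Suc.prems by simp_all
  have dd: "\<And>p. (\<lambda>p. L (f p)) differentiable at p" using diff_lin[OF Suc.prems(1) d] .
  have c: "Ck k (\<lambda>p. frechet_derivative f (at p) v)" for v
    using Suc.prems by simp_all
  have e: "(\<lambda>p. frechet_derivative (\<lambda>p. L (f p)) (at p) v)
       = (\<lambda>p. L (frechet_derivative f (at p) v))" for v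
    by (rule ext) (rule fd_lin[OF Suc.prems(1) d])
  have "Ck k (\<lambda>p. frechet_derivative (\<lambda>p. L (f p)) (at p) v)" for v
    unfolding e using Suc.IH[OF Suc.prems(1) c] .
  then show ?case using dd by simp
qed

lemma smooth_add: assumes "smooth f" "smooth g" shows "smooth (\<lambda>p. f p + g p)"
  unfolding smooth_def
proof
  fix k
  have "Ck k f" using assms(1) unfolding smooth_def by (rule spec)
  have "Ck k g" using assms(2) unfolding smooth_def by (rule spec)
  then show "Ck k (\<lambda>p. f p + g p)" using \<open>Ck k f\<close> by (rule Ck_add[rotated])
qed


lemma smooth_lin: assumes "bounded_linear L" "smooth f" shows "smooth (\<lambda>p. L (f p))"
  unfolding smooth_def
proof
  fix k
  have "Ck k f" using assms(2) unfolding smooth_def by (rule spec)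
  then show "Ck k (\<lambda>p. L (f p))" by (rule Ck_lin[OF assms(1)])
qed


lemma smooth_diff: assumes "smooth f" shows "f differentiable at p"
proof -
  have "Ck (Suc 0) f" using assms unfolding smooth_def by (rule spec)
  then show ?thesis by simp
qed


lemma curv_formula:
  assumes "bilinear (Gam p)"
  shows "curv Gam p u v w =
    frechet_derivative (\<lambda>q. Gam q u w) (at p) v + Gam p v (Gam p u w)
    - (frechet_derivative (\<lambda>q. Gam q v w) (at p) u + Gam p u (Gam p v w))"
proof -
  have c1: "cov Gam (\<lambda>_. a) (\<lambda>_. w) = (\<lambda>q. Gam q a w)" for a
    by (rule ext) (simp only: cov_def frechet_derivative_const add_0_left)
  have lb: "lie_bracket (\<lambda>_. u) (\<lambda>_. v) = (\<lambda>_. 0)"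
    by (rule ext) (simp only: lie_bracket_def frechet_derivative_const diff_self)
  have z: "cov Gam (\<lambda>_. 0) (\<lambda>_. w) p = 0"
    by (simp only: cov_def frechet_derivative_const add_0_left bilinear_lzero[OF assms])
  have a: "cov Gam (\<lambda>_. v) (\<lambda>q. Gam q u w) p = frechet_derivative (\<lambda>q. Gam q u w) (at p) v + Gam p v (Gam p u w)"
    by (simp only: cov_def)
  have b: "cov Gam (\<lambda>_. u) (\<lambda>q. Gam q v w) p = frechet_derivative (\<lambda>q. Gam q v w) (at p) u + Gam p u (Gam p v w)"
    by (simp only: cov_def)
  show ?thesis
    unfolding curv_def Let_def c1 lb a b by (simp only: cov_def frechet_derivative_const bilinear_lzero[OF assms] add_0_right add_0_left)
qed


lemma fd_slot_linear:
  assumes add: "\<And>q x y. F q (x + y) = F q x + F q y"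
    and scl: "\<And>q c x. F q (c *\<^sub>R x) = c *\<^sub>R F q x"
    and dif: "\<And>u q. (\<lambda>q. F q u) differentiable at q"
  shows "linear (\<lambda>u. frechet_derivative (\<lambda>q. F q u) (at p) v)"
proof (rule linearI)
  fix x y
  have e1: "(\<lambda>q. F q (x + y)) = (\<lambda>q. F q x + F q y)"
    by (rule ext) (rule add)
  thm e1
  have e2: "frechet_derivative (\<lambda>q. F q x + F q y) (at p) v =
     frechet_derivative (\<lambda>q. F q x) (at p) v + frechet_derivative (\<lambda>q. F q y) (at p) v"
    by (rule fd_add[OF dif dif])
  thm e2
  show "frechet_derivative (\<lambda>q. F q (x + y)) (at p) v =
     frechet_derivative (\<lambda>q. F q x) (at p) v + frechet_derivative (\<lambda>q. F q y) (at p) v"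
    unfolding e1 e2 ..
next
  fix c x
  show "frechet_derivative (\<lambda>q. F q (c *\<^sub>R x)) (at p) v =
     c *\<^sub>R frechet_derivative (\<lambda>q. F q x) (at p) v"
  proof -
    have e: "(\<lambda>q. F q (c *\<^sub>R x)) = (\<lambda>q. c *\<^sub>R F q x)" by (rule ext) (rule scl)
    show ?thesis unfolding e by (rule fd_lin[OF bounded_linear_scaleR_right dif])
  qed
qed




lemma curv_add:
  assumes bil: "\<forall>q. bilinear (Gam q)" and lin: "\<forall>q. linear (eta q)"
    and dG: "\<forall>u w q. (\<lambda>q. Gam q u w) differentiable at q"
    and de: "\<forall>u q. (\<lambda>q. eta q u) differentiable at q"
  shows "curv (\<lambda>q u w. Gam q u w + eta q u *\<^sub>R w) p u v w = curv Gam p u v w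
     + (frechet_derivative (\<lambda>q. eta q u) (at p) v - frechet_derivative (\<lambda>q. eta q v) (at p) u) *\<^sub>R w"
proof -
  have bp: "bilinear (Gam p)" using bil by auto
  have lp: "linear (eta p)" using lin by auto
  have b2: "bilinear (\<lambda>u w. Gam p u w + eta p u *\<^sub>R w)"
    unfolding bilinear_def
  proof (intro allI conjI)
    fix x show "linear (\<lambda>y. Gam p x y + eta p x *\<^sub>R y)"
      by (rule linearI) (simp_all add: bilinear_radd[OF bp] bilinear_rmul[OF bp] algebra_simps)
  next
    fix y show "linear (\<lambda>x. Gam p x y + eta p x *\<^sub>R y)"
      by (rule linearI) (simp_all add: bilinear_ladd[OF bp] bilinear_lmul[OF bp]
          linear_add[OF lp] linear_scale[OF lp] algebra_simps)
  qed
  have fd: "frechet_derivative (\<lambda>q. Gam q a b + eta q a *\<^sub>R b) (at p) c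
      = frechet_derivative (\<lambda>q. Gam q a b) (at p) c + frechet_derivative (\<lambda>q. eta q a) (at p) c *\<^sub>R b" for a b c
  proof -
    have d1: "(\<lambda>q. Gam q a b) differentiable at p" using dG by blast
    have d2: "(\<lambda>q. eta q a) differentiable at p" using de by blast
    have d3: "(\<lambda>q. eta q a *\<^sub>R b) differentiable at p"
      using diff_lin[OF bounded_linear_scaleR_left d2] .
    have "frechet_derivative (\<lambda>q. Gam q a b + eta q a *\<^sub>R b) (at p) c
      = frechet_derivative (\<lambda>q. Gam q a b) (at p) c + frechet_derivative (\<lambda>q. eta q a *\<^sub>R b) (at p) c"
      using fd_add[OF d1 d3] .
    also have "frechet_derivative (\<lambda>q. eta q a *\<^sub>R b) (at p) c = frechet_derivative (\<lambda>q. eta q a) (at p) c *\<^sub>R b"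
      using fd_lin[OF bounded_linear_scaleR_left d2] .
    finally show ?thesis .
  qed
  show ?thesis
    unfolding curv_formula[where Gam="\<lambda>q u w. Gam q u w + eta q u *\<^sub>R w", OF b2] curv_formula[where Gam=Gam, OF bp] fd
    by (simp add: bilinear_radd[OF bp] bilinear_rmul[OF bp] algebra_simps)
qed




lemma ax: "(axis 1 1::real^2)$1 = 1" "(axis 1 1::real^2)$2 = 0" "(axis 2 1::real^2)$1 = 0" "(axis 2 1::real^2)$2 = 1"
  by (simp_all add: axis_def)

lemma bil_expand:
  fixes B :: "real^2 \<Rightarrow> real^2 \<Rightarrow> real"
  assumes L1: "\<And>y. linear (\<lambda>x. B x y)" and L2: "\<And>x. linear (\<lambda>y. B x y)"
  shows "B x y = x$1 * y$1 * B (axis 1 1) (axis 1 1) + x$1 * y$2 * B (axis 1 1) (axis 2 1)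
     + x$2 * y$1 * B (axis 2 1) (axis 1 1) + x$2 * y$2 * B (axis 2 1) (axis 2 1)"
proof -
  have "B x y = x$1 * B (axis 1 1) y + x$2 * B (axis 2 1) y" using expand2[OF L1[of y], of x] by simp
  also have "B (axis 1 1) y = y$1 * B (axis 1 1) (axis 1 1) + y$2 * B (axis 1 1) (axis 2 1)"
    using expand2[OF L2[of "axis 1 1"], of y] by simp
  also have "B (axis 2 1) y = y$1 * B (axis 2 1) (axis 1 1) + y$2 * B (axis 2 1) (axis 2 1)"
    using expand2[OF L2[of "axis 2 1"], of y] by simp
  finally show ?thesis by (simp add: algebra_simps)
qed

lemma conn_bil: "is_connection G D \<Longrightarrow> \<forall>q. bilinear (D q)"
  unfolding is_connection_def by blast

lemma conn_diff: assumes "is_connection G D" shows "\<forall>u w q. (\<lambda>q. D q u w) differentiable at q"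
proof (intro allI)
  fix u w q
  have "smooth (\<lambda>p. D p u w)" using assms unfolding is_connection_def by blast
  then show "(\<lambda>q. D q u w) differentiable at q" by (rule smooth_diff)
qed

lemma form_diff: assumes "is_one_form G xi" shows "\<forall>u q. (\<lambda>q. xi q u) differentiable at q"
proof (intro allI)
  fix u q
  have "smooth (\<lambda>p. xi p u)" using assms unfolding is_one_form_def by blast
  then show "(\<lambda>q. xi q u) differentiable at q" by (rule smooth_diff)
qed

lemma dir1:
  assumes C: "is_connection G D" and F: "flat D" and X: "is_one_form G xi"
  shows "ricci_skew (twist D xi)"
proof -
  have bil: "\<forall>q. bilinear (D q)" using conn_bil[OF C] .
  have dD: "\<forall>u w q. (\<lambda>q. D q u w) differentiable at q" using conn_diff[OF C] .
  define eta where "eta = (\<lambda>q u. - xi q u)"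
  have lx: "linear (xi q)" for q using X unfolding is_one_form_def by blast
  have ladd: "eta q (x + y) = eta q x + eta q y" for q x y
    unfolding eta_def by (simp add: linear_add[OF lx])
  have lscl: "eta q (c *\<^sub>R x) = c *\<^sub>R eta q x" for q c x
    unfolding eta_def by (simp add: linear_scale[OF lx])
  have lin: "\<forall>q. linear (eta q)"
    using ladd lscl by (auto intro!: linearI)
  have de: "\<And>u q. (\<lambda>q. eta q u) differentiable at q"
    unfolding eta_def by (rule differentiable_minus) (use form_diff[OF X] in blast)
  have tw: "twist D xi = (\<lambda>q u w. D q u w + eta q u *\<^sub>R w)"
    unfolding twist_def eta_def by (intro ext) simp
  show ?thesis unfolding ricci_skew_def tw
  proof (intro allI)
    fix p u v
    define B where "B x y = frechet_derivative (\<lambda>q. eta q y) (at p) x" for x y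
    have cu: "curv (\<lambda>q u w. D q u w + eta q u *\<^sub>R w) p a b c = (B b a - B a b) *\<^sub>R c" for a b c
      using curv_add[OF bil lin dD, of p a b c] de F unfolding flat_def B_def by simp
    have L1: "linear (\<lambda>x. B x y)" for y
      unfolding B_def by (rule linear_frechet_derivative) (rule de)
    have L2: "linear (\<lambda>y. B x y)" for x
      unfolding B_def by (rule fd_slot_linear[OF ladd lscl de])
    have ric: "ricci (\<lambda>q u w. D q u w + eta q u *\<^sub>R w) p a c
       = (B (axis 1 1) a - B a (axis 1 1)) * c$1 + (B (axis 2 1) a - B a (axis 2 1)) * c$2" for a c
      unfolding ricci_def sum_2 cu by simp
    show "ricci (\<lambda>q u w. D q u w + eta q u *\<^sub>R w) p u v = - ricci (\<lambda>q u w. D q u w + eta q u *\<^sub>R w) p v u"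
    proof -
      obtain b11 b12 b21 b22 where Bx: "\<And>x y. B x y = x$1 * y$1 * b11 + x$1 * y$2 * b12 + x$2 * y$1 * b21 + x$2 * y$2 * b22"
        using bil_expand[of B, OF L1 L2] by blast
      show ?thesis unfolding ric Bx by (simp add: ax algebra_simps)
    qed
  qed
qed




lemma deck_diag:
  assumes "G = torus_deck \<or> G = klein_deck" "g \<in> G"
  shows "\<exists>s::real. s * s = 1 \<and> (\<forall>x. (fst g *v x)$1 = x$1 \<and> (fst g *v x)$2 = s * x$2)"
  using assms(1)
proof
  assume "G = torus_deck"
  then have "fst g = mat 1" using assms(2) unfolding torus_deck_def by auto
  then show ?thesis by (intro exI[of _ 1]) simp
next
  assume "G = klein_deck"
  then obtain m :: int where m: "fst g = diag2 1 ((-1) powi m)" using assms(2) unfolding klein_deck_def by auto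
  have ss: "(-1::real) powi m * (-1) powi m = 1"
    by (simp add: power_int_mult_distrib[symmetric])
  have "(diag2 1 s *v x)$1 = x$1 \<and> (diag2 1 s *v x)$2 = s * x$2" for s x
    by (simp add: matrix_vector_mult_def sum_2 diag2_def)
  then show ?thesis using ss unfolding m by blast
qed

definition trc :: "(pt \<Rightarrow> pt \<Rightarrow> pt \<Rightarrow> pt) \<Rightarrow> pt \<Rightarrow> pt \<Rightarrow> real" where
  "trc Gam q u = (Gam q u (axis 1 1))$1 + (Gam q u (axis 2 1))$2"

lemma trc_inv:
  assumes G: "G = torus_deck \<or> G = klein_deck" and C: "is_connection G Gam" and g: "g \<in> G"
  shows "trc Gam (act g p) (fst g *v u) = trc Gam p u"
proof -
  obtain s :: real where s: "s * s = 1" and A: "\<And>x. (fst g *v x)$1 = x$1" "\<And>x. (fst g *v x)$2 = s * x$2"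
    using deck_diag[OF G g] by blast
  have inv: "Gam (act g p) (fst g *v a) (fst g *v b) = fst g *v Gam p a b" for a b
    using C g unfolding is_connection_def by blast
  have bp: "bilinear (Gam p)" using C unfolding is_connection_def by blast
  have e1: "fst g *v axis 1 1 = axis 1 1" by (simp add: vec_eq_iff forall_2 A ax)
  have e2: "fst g *v (s *\<^sub>R axis 2 1) = axis 2 1" by (simp add: vec_eq_iff forall_2 A ax s)
  have "trc Gam (act g p) (fst g *v u) =
     (Gam (act g p) (fst g *v u) (fst g *v axis 1 1))$1 + (Gam (act g p) (fst g *v u) (fst g *v (s *\<^sub>R axis 2 1)))$2"
    unfolding trc_def e1 e2 ..
  also have "\<dots> = (Gam p u (axis 1 1))$1 + (Gam p u (axis 2 1))$2"
    unfolding inv by (simp add: A bilinear_rmul[OF bp] mult.assoc[symmetric] s)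
  finally show ?thesis unfolding trc_def .
qed




lemma flat_main:
  assumes bil: "\<forall>q. bilinear (Gam q)" and dG: "\<forall>u w q. (\<lambda>q. Gam q u w) differentiable at q"
    and sk: "ricci_skew Gam"
  shows "flat (\<lambda>q u w. Gam q u w + ((-1/2) *\<^sub>R trc Gam q u) *\<^sub>R w)"
proof -
  define eta where "eta q u = (-1/2::real) *\<^sub>R trc Gam q u" for q u
  have bq: "bilinear (Gam q)" for q using bil by blast
  have tadd: "trc Gam q (x + y) = trc Gam q x + trc Gam q y" for q x y
    unfolding trc_def by (simp add: bilinear_ladd[OF bq])
  have tscl: "trc Gam q (c *\<^sub>R x) = c *\<^sub>R trc Gam q x" for q c x
    unfolding trc_def by (simp add: bilinear_lmul[OF bq] algebra_simps)
  have eadd: "eta q (x + y) = eta q x + eta q y" for q x y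
    unfolding eta_def tadd by (simp add: algebra_simps)
  have escl: "eta q (c *\<^sub>R x) = c *\<^sub>R eta q x" for q c x
    unfolding eta_def tscl by (simp add: algebra_simps)
  have lin: "\<forall>q. linear (eta q)"
    using eadd escl by (auto intro!: linearI)
  have dGa: "(\<lambda>q. Gam q u w) differentiable at p" for u w p using dG by blast
  have dtr: "(\<lambda>q. trc Gam q u) differentiable at p" for u p
    unfolding trc_def
    by (rule differentiable_add; rule diff_lin[OF bounded_linear_vec_nth dGa])
  have de: "\<forall>u q. (\<lambda>q. eta q u) differentiable at q"
    unfolding eta_def using diff_lin[OF bounded_linear_scaleR_right dtr] by blast
  show ?thesis unfolding flat_def eta_def[symmetric]
  proof (intro allI)
    fix p u v w
    define Bt where "Bt x y = frechet_derivative (\<lambda>q. trc Gam q y) (at p) x" for x y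
    define R where "R a b c = curv Gam p a b c" for a b c
    have ceta: "frechet_derivative (\<lambda>q. eta q y) (at p) x = (-1/2) * Bt x y" for x y
      unfolding eta_def Bt_def using fd_lin[OF bounded_linear_scaleR_right[of "-1/2"] dtr, of y p x] by simp
    have Btf: "Bt x y = (frechet_derivative (\<lambda>q. Gam q y (axis 1 1)) (at p) x)$1
        + (frechet_derivative (\<lambda>q. Gam q y (axis 2 1)) (at p) x)$2" for x y
      unfolding Bt_def trc_def
      by (simp add: fd_add[OF diff_lin[OF bounded_linear_vec_nth dGa] diff_lin[OF bounded_linear_vec_nth dGa]]
           fd_lin[OF bounded_linear_vec_nth dGa])
    have Rf: "R a b c = frechet_derivative (\<lambda>q. Gam q a c) (at p) b + Gam p b (Gam p a c)
      - (frechet_derivative (\<lambda>q. Gam q b c) (at p) a + Gam p a (Gam p b c))" for a b c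
      unfolding R_def by (rule curv_formula[OF bq])
    have anti: "R a b c = - R b a c" for a b c unfolding Rf by (simp add: algebra_simps)
    have R0: "R a a c = 0" for a c using anti[of a a c] unfolding vec_eq_iff by simp
    have LB1: "linear (\<lambda>x. Bt x y)" for y
      unfolding Bt_def by (rule linear_frechet_derivative) (rule dtr)
    have LB2: "linear (\<lambda>y. Bt x y)" for x
      unfolding Bt_def by (rule fd_slot_linear[OF tadd tscl dtr])
    have LdU: "linear (\<lambda>a. frechet_derivative (\<lambda>q. Gam q a c) (at p) b)" for b c
      by (rule fd_slot_linear[where F="\<lambda>q a. Gam q a c"])
         (simp_all add: bilinear_ladd[OF bq] bilinear_lmul[OF bq] dGa)
    have LdW: "linear (\<lambda>c. frechet_derivative (\<lambda>q. Gam q a c) (at p) b)" for a b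
      by (rule fd_slot_linear[where F="\<lambda>q c. Gam q a c"])
         (simp_all add: bilinear_radd[OF bq] bilinear_rmul[OF bq] dGa)
    have LdV: "linear (\<lambda>b. frechet_derivative (\<lambda>q. Gam q a c) (at p) b)" for a c
      by (rule linear_frechet_derivative) (rule dGa)
    have RL1: "linear (\<lambda>a. R a b c)" for b c
    proof (rule linearI)
      fix x y show "R (x + y) b c = R x b c + R y b c"
        unfolding Rf by (simp only: linear_add[OF LdU] linear_add[OF LdV]) (simp add: bilinear_ladd[OF bq] bilinear_radd[OF bq] algebra_simps)
    next
      fix r x show "R (r *\<^sub>R x) b c = r *\<^sub>R R x b c"
        unfolding Rf by (simp only: linear_scale[OF LdU] linear_scale[OF LdV]) (simp add: bilinear_lmul[OF bq] bilinear_rmul[OF bq] algebra_simps)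
    qed
    have RL2: "linear (\<lambda>b. R a b c)" for a c
    proof (rule linearI)
      fix x y show "R a (x + y) c = R a x c + R a y c"
        unfolding Rf by (simp only: linear_add[OF LdU] linear_add[OF LdV]) (simp add: bilinear_ladd[OF bq] bilinear_radd[OF bq] algebra_simps)
    next
      fix r x show "R a (r *\<^sub>R x) c = r *\<^sub>R R a x c"
        unfolding Rf by (simp only: linear_scale[OF LdU] linear_scale[OF LdV]) (simp add: bilinear_lmul[OF bq] bilinear_rmul[OF bq] algebra_simps)
    qed
    have RL3: "linear (\<lambda>c. R a b c)" for a b
    proof (rule linearI)
      fix x y show "R a b (x + y) = R a b x + R a b y"
        unfolding Rf by (simp only: linear_add[OF LdW]) (simp add: bilinear_radd[OF bq] algebra_simps)
    next
      fix r x show "R a b (r *\<^sub>R x) = r *\<^sub>R R a b x"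
        unfolding Rf by (simp only: linear_scale[OF LdW]) (simp add: bilinear_rmul[OF bq] algebra_simps)
    qed
    define e1 :: "real^2" where "e1 = axis 1 1"
    define e2 :: "real^2" where "e2 = axis 2 1"
    define K where "K c = R e1 e2 c" for c
    have Ruv: "R u v w = (u$1 * v$2 - u$2 * v$1) *\<^sub>R K w"
    proof -
      have "R u v w = u$1 *\<^sub>R R e1 v w + u$2 *\<^sub>R R e2 v w"
        unfolding e1_def e2_def by (rule expand2[OF RL1])
      also have "R e1 v w = v$2 *\<^sub>R K w"
        using expand2[OF RL2[of e1 w], of v] unfolding K_def e1_def[symmetric] e2_def[symmetric] R0 by simp
      also have "R e2 v w = - (v$1 *\<^sub>R K w)"
        using expand2[OF RL2[of e2 w], of v] anti[of e2 e1 w] unfolding K_def e1_def[symmetric] e2_def[symmetric] R0 by simp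
      finally show ?thesis by (simp add: algebra_simps)
    qed
    have ric: "ricci Gam p a c = (R a e1 c)$1 + (R a e2 c)$2" for a c
      unfolding ricci_def sum_2 R_def e1_def e2_def ..
    have sk': "ricci Gam p a c = - ricci Gam p c a" for a c using sk unfolding ricci_skew_def by blast
    have k12: "(K e1)$2 = 0"
      using sk'[of e1 e1] unfolding ric K_def R0 by simp
    have k21: "(K e2)$1 = 0"
      using sk'[of e2 e2] unfolding ric K_def R0 anti[of e2 e1] by simp
    have k11: "(K e2)$2 = (K e1)$1"
      using sk'[of e1 e2] unfolding ric K_def R0 anti[of e2 e1] by simp
    define lam where "lam = (K e1)$1"
    have Kw: "K w = lam *\<^sub>R w"
    proof -
      have "K w = w$1 *\<^sub>R K e1 + w$2 *\<^sub>R K e2"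
        unfolding K_def e1_def e2_def by (rule expand2[OF RL3])
      then show ?thesis
        by (simp add: vec_eq_iff forall_2 k12 k21 k11 lam_def)
    qed
    have tr: "(K e1)$1 + (K e2)$2 = Bt e2 e1 - Bt e1 e2"
    proof -
      have lg: "linear (Gam p a)" for a using bq unfolding bilinear_def by blast
      have q1: "Gam p e2 (Gam p e1 c) = (Gam p e1 c)$1 *\<^sub>R Gam p e2 e1 + (Gam p e1 c)$2 *\<^sub>R Gam p e2 e2" for c
        unfolding e1_def e2_def by (rule expand2[OF lg])
      have q2: "Gam p e1 (Gam p e2 c) = (Gam p e2 c)$1 *\<^sub>R Gam p e1 e1 + (Gam p e2 c)$2 *\<^sub>R Gam p e1 e2" for c
        unfolding e1_def e2_def by (rule expand2[OF lg])
      show ?thesis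
        unfolding K_def Rf Btf e1_def[symmetric] e2_def[symmetric] q1 q2
        by (simp add: algebra_simps)
    qed
    obtain b11 b12 b21 b22 where Bx: "\<And>x y. Bt x y = x$1 * y$1 * b11 + x$1 * y$2 * b12 + x$2 * y$1 * b21 + x$2 * y$2 * b22"
      using bil_expand[of Bt, OF LB1 LB2] by blast
    have tr2: "2 * lam = b21 - b12"
      using tr k11 unfolding Bx lam_def e1_def e2_def by (simp add: ax)
    have h1: "Bt v u - Bt u v = (u$1 * v$2 - u$2 * v$1) * (b21 - b12)"
      unfolding Bx by (simp add: algebra_simps)
    have h2: "frechet_derivative (\<lambda>q. eta q u) (at p) v - frechet_derivative (\<lambda>q. eta q v) (at p) u
       = - ((u$1 * v$2 - u$2 * v$1) * lam)"
    proof -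
      have "frechet_derivative (\<lambda>q. eta q u) (at p) v - frechet_derivative (\<lambda>q. eta q v) (at p) u
         = (-1/2) * (Bt v u - Bt u v)" unfolding ceta by (simp add: algebra_simps)
      also have "\<dots> = (-1/2) * ((u$1 * v$2 - u$2 * v$1) * (2 * lam))" unfolding h1 tr2 ..
      finally show ?thesis by simp
    qed
    show "curv (\<lambda>q u w. Gam q u w + eta q u *\<^sub>R w) p u v w = 0"
      unfolding curv_add[OF bil lin dG de] R_def[symmetric] Ruv Kw h2
      by (simp add: scaleR_add_left[symmetric])
  qed
qed




lemma dir2:
  assumes G: "G = torus_deck \<or> G = klein_deck" and C: "is_connection G Gam" and sk: "ricci_skew Gam"
  shows "\<exists>D xi. is_connection G D \<and> flat D \<and> is_one_form G xi \<and> Gam = twist D xi"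
proof -
  define xi where "xi = (\<lambda>q u. (-1/2::real) *\<^sub>R trc Gam q u)"
  define D where "D = (\<lambda>q u w. Gam q u w + xi q u *\<^sub>R w)"
  have bil: "\<forall>q. bilinear (Gam q)" using conn_bil[OF C] .
  have bq: "bilinear (Gam q)" for q using bil by blast
  have dG: "\<forall>u w q. (\<lambda>q. Gam q u w) differentiable at q" using conn_diff[OF C] .
  have sG: "smooth (\<lambda>q. Gam q u w)" for u w using C unfolding is_connection_def by blast
  have tadd: "trc Gam q (x + y) = trc Gam q x + trc Gam q y" for q x y
    unfolding trc_def by (simp add: bilinear_ladd[OF bq])
  have tscl: "trc Gam q (c *\<^sub>R x) = c *\<^sub>R trc Gam q x" for q c x
    unfolding trc_def by (simp add: bilinear_lmul[OF bq] algebra_simps)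
  have xadd: "xi q (x + y) = xi q x + xi q y" for q x y
    unfolding xi_def tadd by (simp add: algebra_simps)
  have xscl: "xi q (c *\<^sub>R x) = c *\<^sub>R xi q x" for q c x
    unfolding xi_def tscl by (simp add: algebra_simps)
  have lx: "linear (xi q)" for q
    using xadd xscl by (auto intro!: linearI)
  have st: "smooth (\<lambda>q. trc Gam q u)" for u
    unfolding trc_def
    by (rule smooth_add; rule smooth_lin[OF bounded_linear_vec_nth sG])
  have sx: "smooth (\<lambda>q. xi q u)" for u
    unfolding xi_def by (rule smooth_lin[OF bounded_linear_scaleR_right st])
  have xinv: "xi (act g p) (fst g *v u) = xi p u" if "g \<in> G" for g p u
    unfolding xi_def trc_inv[OF G C that] ..
  have form: "is_one_form G xi"
    unfolding is_one_form_def using lx sx xinv by blast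
  have flat: "flat D"
    unfolding D_def xi_def by (rule flat_main[OF bil dG sk])
  have tw: "Gam = twist D xi"
    unfolding twist_def D_def by (intro ext) simp
  have bD: "bilinear (D p)" for p
    unfolding bilinear_def D_def
  proof (intro allI conjI)
    fix x show "linear (\<lambda>y. Gam p x y + xi p x *\<^sub>R y)"
      by (rule linearI) (simp_all add: bilinear_radd[OF bq] bilinear_rmul[OF bq] algebra_simps)
  next
    fix y show "linear (\<lambda>x. Gam p x y + xi p x *\<^sub>R y)"
      by (rule linearI) (simp_all add: bilinear_ladd[OF bq] bilinear_lmul[OF bq]
          xadd xscl algebra_simps)
  qed
  have sD: "smooth (\<lambda>p. D p u w)" for u w
    unfolding D_def by (rule smooth_add[OF sG smooth_lin[OF bounded_linear_scaleR_left sx]])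
  have iD: "D (act g p) (fst g *v u) (fst g *v w) = fst g *v D p u w" if "g \<in> G" for g p u w
  proof -
    have "Gam (act g p) (fst g *v u) (fst g *v w) = fst g *v Gam p u w"
      using C that unfolding is_connection_def by blast
    then show ?thesis
      unfolding D_def xinv[OF that] by (simp add: matrix_vector_right_distrib matrix_vector_mult_scaleR)
  qed
  have conn: "is_connection G D"
    unfolding is_connection_def using bD sD iD by blast
  show ?thesis using conn flat form tw by blast
qed

theorem theorem5p2:
  assumes "G = torus_deck \<or> G = klein_deck"
  shows "(\<forall>D xi. is_connection G D \<and> flat D \<and> is_one_form G xi
             \<longrightarrow> ricci_skew (twist D xi))
       \<and> (\<forall>Gam. is_connection G Gam \<and> ricci_skew Gam
             \<longrightarrow> (\<exists>D xi. is_connection G D \<and> flat D \<and> is_one_form G xi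
                        \<and> Gam = twist D xi))"
  using dir1 dir2[OF assms] by blast


end
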